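(* Let $\nu=\sum_{i=1}^kw_i\delta_{\mu_i}$ and $\hat\nu=\sum_{i=1}^k\hat w_i\delta_{\hat\mu_i}$ be probability distributions on $\mathbb{R}$, and suppose $W_1(\nu,\hat\nu)<\epsilon$. Let \[\epsilon_1=\min\{|\mu_i-\mu_j|,|\hat\mu_i-\hat\mu_j|:1\le i<j\le k\},\qquad \epsilon_2=\min\{w_i,\hat w_i:i\in[k]\}.\] If $\epsilon<\epsilon_1\epsilon_2/4$, then there exists a permutation $\Pi$ such that \[\|\mu-\Pi\hat\mu\|_\infty<\epsilon/\epsilon_2,\qquad \|w-\Pi\hat w\|_\infty<2\epsilon/\epsilon_1,\] where $\mu=(\mu_1,\dots,\mu_k)$, $w=(w_1,\dots,w_k)$, and $\hat\mu,\hat w$ are defined analogously.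
   Context: $W_1$ is the 1-Wasserstein distance: $W_1(\nu,\nu')=\inf\mathbb{E}|X-Y|$ over couplings with $X\sim\nu$, $Y\sim\nu'$. *)

theory Defs
  imports "HOL-Probability.Probability"
begin

definition mix_dirac :: "nat \<Rightarrow> (nat \<Rightarrow> real) \<Rightarrow> (nat \<Rightarrow> real) \<Rightarrow> real measure" where
  "mix_dirac k w \<mu> =
     measure_of UNIV (sets borel) (\<lambda>A. \<Sum>i<k. ennreal (w i) * indicator A (\<mu> i))"

definition coupling :: "real measure \<Rightarrow> real measure \<Rightarrow> (real \<times> real) measure \<Rightarrow> bool" where
  "coupling \<nu> \<nu>' \<pi> \<longleftrightarrow>
     prob_space \<pi> \<and> sets \<pi> = sets (borel \<Otimes>\<^sub>M borel) \<and>
     distr \<pi> borel fst = \<nu> \<and> distr \<pi> borel snd = \<nu>'"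

definition W1 :: "real measure \<Rightarrow> real measure \<Rightarrow> ennreal" where
  "W1 \<nu> \<nu>' = (INF \<pi> \<in> {\<pi>. coupling \<nu> \<nu>' \<pi>}. \<integral>\<^sup>+ z. ennreal \<bar>fst z - snd z\<bar> \<partial>\<pi>)"

end

theory Submission
  imports Defs "HOL-Combinatorics.Permutations"
begin


lemma mix_emeasure:
  assumes w: "\<forall>i<k. w i \<ge> 0" and A: "A \<in> sets borel"
  shows "emeasure (mix_dirac k w \<mu>) A = (\<Sum>i<k. ennreal (w i) * indicator A (\<mu> i))"
  unfolding mix_dirac_def
proof (rule emeasure_measure_of_sigma[OF _ _ _ A])
  show "sigma_algebra UNIV (sets borel)"
    by (metis sets.sigma_algebra_axioms space_borel)
  show "positive (sets borel) (\<lambda>A. \<Sum>i<k. ennreal (w i) * indicator A (\<mu> i))"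
    by (simp add: positive_def)
  show "countably_additive (sets borel) (\<lambda>A. \<Sum>i<k. ennreal (w i) * indicator A (\<mu> i))"
    unfolding countably_additive_def
  proof (intro allI impI)
    fix F :: "nat \<Rightarrow> real set"
    assume "range F \<subseteq> sets borel" "disjoint_family F"
    then have "(\<Sum>n. \<Sum>i<k. ennreal (w i) * indicator (F n) (\<mu> i)) =
        (\<Sum>i<k. \<Sum>n. ennreal (w i) * indicator (F n) (\<mu> i))"
      by (intro suminf_sum summableI)
    also have "\<dots> = (\<Sum>i<k. ennreal (w i) * indicator (\<Union>n. F n) (\<mu> i))"
      using \<open>disjoint_family F\<close> by (simp add: suminf_indicator)
    finally show "(\<Sum>n. \<Sum>i<k. ennreal (w i) * indicator (F n) (\<mu> i)) =
        (\<Sum>i<k. ennreal (w i) * indicator (\<Union>n. F n) (\<mu> i))" .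
  qed
qed

lemma sets_mix[simp]: "sets (mix_dirac k w \<mu>) = sets borel"
proof -
  have "sigma_sets UNIV (sets borel) = (sets borel :: real set set)"
    using sets.sigma_sets_eq[of borel] by simp
  then show ?thesis unfolding mix_dirac_def by (subst sets_measure_of) auto
qed

lemma mix_measure:
  assumes w: "\<forall>i<k. w i \<ge> 0" and A: "A \<in> sets borel"
  shows "measure (mix_dirac k w \<mu>) A = (\<Sum>i<k. w i * indicator A (\<mu> i))"
proof -
  have "(\<Sum>i<k. ennreal (w i) * indicator A (\<mu> i)) = ennreal (\<Sum>i<k. w i * indicator A (\<mu> i))"
  proof -
    have "(\<Sum>i<k. ennreal (w i) * indicator A (\<mu> i)) = (\<Sum>i<k. ennreal (w i * indicator A (\<mu> i)))"
      using w by (intro sum.cong) (auto simp: indicator_def)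
    also have "\<dots> = ennreal (\<Sum>i<k. w i * indicator A (\<mu> i))"
      using w by (intro sum_ennreal) (auto simp: indicator_def)
    finally show ?thesis .
  qed
  moreover have "(\<Sum>i<k. w i * indicator A (\<mu> i)) \<ge> 0"
    using w by (auto intro!: sum_nonneg)
  ultimately show ?thesis
    unfolding measure_def using mix_emeasure[OF w A] by simp
qed

lemma mix_point:
  assumes w: "\<forall>i<k. w i \<ge> 0" and inj: "inj_on \<mu> {..<k}" and i: "i < k"
  shows "measure (mix_dirac k w \<mu>) {\<mu> i} = w i"
proof -
  have "measure (mix_dirac k w \<mu>) {\<mu> i} = (\<Sum>j<k. w j * indicator {\<mu> i} (\<mu> j))"
    using mix_measure[OF w] by simp
  also have "\<dots> = (\<Sum>j\<in>{i}. w j * indicator {\<mu> i} (\<mu> j))"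
    using inj i by (intro sum.mono_neutral_right) (auto simp: inj_on_def indicator_def)
  finally show ?thesis by simp
qed

lemma mix_compl:
  assumes w: "\<forall>i<k. w i \<ge> 0"
  shows "measure (mix_dirac k w \<mu>) (- (\<mu> ` {..<k})) = 0"
proof -
  have "- (\<mu> ` {..<k}) \<in> sets borel"
    by (intro borel_open open_Compl finite_imp_closed) auto
  moreover have "(\<Sum>i<k. w i * indicator (- (\<mu> ` {..<k})) (\<mu> i)) = 0"
    by (intro sum.neutral) (auto simp: indicator_def)
  ultimately show ?thesis
    using mix_measure[OF w, of "- (\<mu> ` {..<k})" \<mu>] by simp
qed

lemma coupling_fst:
  assumes "coupling \<nu> \<nu>' \<pi>" "A \<in> sets borel"
  shows "measure \<pi> (A \<times> UNIV) = measure \<nu> A"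
proof -
  have s: "sets \<pi> = sets (borel \<Otimes>\<^sub>M borel)" "space \<pi> = UNIV"
    using assms(1) unfolding coupling_def
    by (auto dest: sets_eq_imp_space_eq simp: space_pair_measure)
  have "fst \<in> measurable \<pi> borel"
    by (subst measurable_cong_sets[OF s(1) refl]) (rule measurable_fst)
  then have "measure (distr \<pi> borel fst) A = measure \<pi> (fst -` A \<inter> space \<pi>)"
    using assms by (simp add: measure_distr)
  moreover have "fst -` A \<inter> space \<pi> = A \<times> UNIV" using s by auto
  moreover have "distr \<pi> borel fst = \<nu>" using assms(1) unfolding coupling_def by blast
  ultimately show ?thesis by simp
qed

lemma coupling_snd:
  assumes "coupling \<nu> \<nu>' \<pi>" "A \<in> sets borel"
  shows "measure \<pi> (UNIV \<times> A) = measure \<nu>' A"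
proof -
  have s: "sets \<pi> = sets (borel \<Otimes>\<^sub>M borel)" "space \<pi> = UNIV"
    using assms(1) unfolding coupling_def
    by (auto dest: sets_eq_imp_space_eq simp: space_pair_measure)
  have "snd \<in> measurable \<pi> borel"
    by (subst measurable_cong_sets[OF s(1) refl]) (rule measurable_snd)
  then have "measure (distr \<pi> borel snd) A = measure \<pi> (snd -` A \<inter> space \<pi>)"
    using assms by (simp add: measure_distr)
  moreover have "snd -` A \<inter> space \<pi> = UNIV \<times> A" using s by auto
  moreover have "distr \<pi> borel snd = \<nu>'" using assms(1) unfolding coupling_def by blast
  ultimately show ?thesis by simp
qed

lemma cost_lower:
  assumes "coupling \<nu> \<nu>' \<pi>" "X \<in> sets \<pi>" "c \<ge> 0" "\<forall>z\<in>X. c \<le> \<bar>fst z - snd z\<bar>"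
  shows "ennreal (c * measure \<pi> X) \<le> (\<integral>\<^sup>+ z. ennreal \<bar>fst z - snd z\<bar> \<partial>\<pi>)"
proof -
  interpret prob_space \<pi> using assms(1) unfolding coupling_def by simp
  have "ennreal (c * measure \<pi> X) = ennreal c * emeasure \<pi> X"
    using assms by (simp add: emeasure_eq_measure ennreal_mult)
  also have "\<dots> = (\<integral>\<^sup>+ z. ennreal c * indicator X z \<partial>\<pi>)"
    using assms by (simp add: nn_integral_cmult_indicator)
  also have "\<dots> \<le> (\<integral>\<^sup>+ z. ennreal \<bar>fst z - snd z\<bar> \<partial>\<pi>)"
    using assms by (intro nn_integral_mono) (auto simp: indicator_def)
  finally show ?thesis .
qed



theorem lemma1:
  fixes k :: nat and w \<mu> wh \<mu>h :: "nat \<Rightarrow> real" and \<epsilon> \<epsilon>\<^sub>1 \<epsilon>\<^sub>2 :: real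
  assumes "k \<ge> 2"
    and "\<forall>i<k. w i \<ge> 0" and "(\<Sum>i<k. w i) = 1"
    and "\<forall>i<k. wh i \<ge> 0" and "(\<Sum>i<k. wh i) = 1"
    and "W1 (mix_dirac k w \<mu>) (mix_dirac k wh \<mu>h) < ennreal \<epsilon>"
    and "\<epsilon>\<^sub>1 = Min ({\<bar>\<mu> i - \<mu> j\<bar> | i j. i < j \<and> j < k} \<union> {\<bar>\<mu>h i - \<mu>h j\<bar> | i j. i < j \<and> j < k})"
    and "\<epsilon>\<^sub>2 = Min ({w i | i. i < k} \<union> {wh i | i. i < k})"
    and "\<epsilon> < \<epsilon>\<^sub>1 * \<epsilon>\<^sub>2 / 4"
  shows "\<exists>\<sigma>. \<sigma> permutes {..<k} \<and>
           (\<forall>i<k. \<bar>\<mu> i - \<mu>h (\<sigma> i)\<bar> < \<epsilon> / \<epsilon>\<^sub>2) \<and>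
           (\<forall>i<k. \<bar>w i - wh (\<sigma> i)\<bar> < 2 * \<epsilon> / \<epsilon>\<^sub>1)"
proof -
  let ?\<nu> = "mix_dirac k w \<mu>" and ?\<nu>h = "mix_dirac k wh \<mu>h"
  define E where "E = (\<lambda>\<pi>. \<integral>\<^sup>+ z. ennreal \<bar>fst z - snd z\<bar> \<partial>\<pi>)"
  obtain \<pi> where cp: "coupling ?\<nu> ?\<nu>h \<pi>" and Elt: "E \<pi> < ennreal \<epsilon>"
    using assms(6) unfolding W1_def E_def INF_less_iff by auto
  interpret prob_space \<pi> using cp unfolding coupling_def by simp
  have sp: "sets \<pi> = sets (borel \<Otimes>\<^sub>M borel)" using cp unfolding coupling_def by simp
  have \<epsilon>pos: "\<epsilon> > 0"
  proof -
    have "0 \<le> E \<pi>" by simp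
    then have "0 < ennreal \<epsilon>" using Elt by (rule le_less_trans)
    then show ?thesis by simp
  qed
  define S1 where "S1 = {\<bar>\<mu> i - \<mu> j\<bar> | i j. i < j \<and> j < k} \<union> {\<bar>\<mu>h i - \<mu>h j\<bar> | i j. i < j \<and> j < k}"
  define S2 where "S2 = {w i | i. i < k} \<union> {wh i | i. i < k}"
  have fS1: "finite S1"
  proof -
    have "S1 \<subseteq> (\<lambda>(i,j). \<bar>\<mu> i - \<mu> j\<bar>) ` ({..<k} \<times> {..<k}) \<union> (\<lambda>(i,j). \<bar>\<mu>h i - \<mu>h j\<bar>) ` ({..<k} \<times> {..<k})"
      unfolding S1_def by force
    then show ?thesis by (rule finite_subset) auto
  qed
  have neS1: "S1 \<noteq> {}" unfolding S1_def using assms(1) by force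
  have fS2: "finite S2" unfolding S2_def by auto
  have neS2: "S2 \<noteq> {}" unfolding S2_def using assms(1) by force
  have e1: "\<epsilon>\<^sub>1 = Min S1" using assms(7) S1_def by simp
  have e2: "\<epsilon>\<^sub>2 = Min S2" using assms(8) S2_def by simp
  have e1nn: "\<epsilon>\<^sub>1 \<ge> 0" using Min_in[OF fS1 neS1] unfolding e1 S1_def by auto
  have e2nn: "\<epsilon>\<^sub>2 \<ge> 0" using Min_in[OF fS2 neS2] assms(2,4) unfolding e2 S2_def by auto
  have "\<epsilon>\<^sub>1 * \<epsilon>\<^sub>2 > 0" using assms(9) \<epsilon>pos by linarith
  then have e1pos: "\<epsilon>\<^sub>1 > 0" and e2pos: "\<epsilon>\<^sub>2 > 0" using e1nn e2nn
    by (auto simp: zero_less_mult_iff)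
  have sep: "\<epsilon>\<^sub>1 \<le> \<bar>\<mu> i - \<mu> j\<bar>" "\<epsilon>\<^sub>1 \<le> \<bar>\<mu>h i - \<mu>h j\<bar>"
    if "i < k" "j < k" "i \<noteq> j" for i j
  proof -
    have "\<bar>\<mu> i - \<mu> j\<bar> \<in> S1 \<and> \<bar>\<mu>h i - \<mu>h j\<bar> \<in> S1"
    proof (cases "i < j")
      case True then show ?thesis unfolding S1_def using that by blast
    next
      case False then have "j < i" using that by simp
      then show ?thesis unfolding S1_def using that by (force simp: abs_minus_commute)
    qed
    then show "\<epsilon>\<^sub>1 \<le> \<bar>\<mu> i - \<mu> j\<bar>" "\<epsilon>\<^sub>1 \<le> \<bar>\<mu>h i - \<mu>h j\<bar>"
      unfolding e1 using Min_le[OF fS1] by auto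
  qed
  have wge: "\<epsilon>\<^sub>2 \<le> w i" "\<epsilon>\<^sub>2 \<le> wh i" if "i < k" for i
  proof -
    have "w i \<in> S2" "wh i \<in> S2" unfolding S2_def using that by auto
    then show "\<epsilon>\<^sub>2 \<le> w i" "\<epsilon>\<^sub>2 \<le> wh i" unfolding e2 using Min_le[OF fS2] by auto
  qed
  have injm: "inj_on \<mu> {..<k}" "inj_on \<mu>h {..<k}"
    unfolding inj_on_def using sep e1pos by fastforce+
  define d where "d = \<epsilon> / \<epsilon>\<^sub>2"
  have dpos: "d > 0" unfolding d_def using \<epsilon>pos e2pos by simp
  have de2: "d * \<epsilon>\<^sub>2 = \<epsilon>" unfolding d_def using e2pos by simp
  have dlt: "d < \<epsilon>\<^sub>1 / 4" unfolding d_def using e2pos assms(9)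
    by (simp add: field_simps)
  define S where "S = \<mu> ` {..<k}"
  define Sh where "Sh = \<mu>h ` {..<k}"
  have fin_borel: "A \<in> sets borel" "- A \<in> sets borel" if "finite A" for A :: "real set"
  proof -
    have "closed A" using that by (rule finite_imp_closed)
    then show "A \<in> sets borel" "- A \<in> sets borel"
      by (auto intro!: borel_closed borel_open simp: open_Compl)
  qed
  have msr: "A \<times> B \<in> sets \<pi>" if "A \<in> sets borel" "B \<in> sets borel" for A B :: "real set"
    unfolding sp using that by simp
  have SB: "S \<in> sets borel" "- S \<in> sets borel" "Sh \<in> sets borel" "- Sh \<in> sets borel"
    unfolding S_def Sh_def by (auto intro!: fin_borel)
  have nullS: "measure \<pi> ((- S) \<times> UNIV) = 0"
    using coupling_fst[OF cp SB(2)] mix_compl[OF assms(2)] unfolding S_def by simp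
  have nullSh: "measure \<pi> (UNIV \<times> (- Sh)) = 0"
    using coupling_snd[OF cp SB(4)] mix_compl[OF assms(4)] unfolding Sh_def by simp
  have margw: "measure \<pi> ({\<mu> i} \<times> UNIV) = w i" if "i < k" for i
    using coupling_fst[OF cp, of "{\<mu> i}"] mix_point[OF assms(2) injm(1) that] by simp
  have margwh: "measure \<pi> (UNIV \<times> {\<mu>h i}) = wh i" if "i < k" for i
    using coupling_snd[OF cp, of "{\<mu>h i}"] mix_point[OF assms(4) injm(2) that] by simp
  have cost: "c * measure \<pi> X < \<epsilon>" if "X \<in> sets \<pi>" "c \<ge> 0" "\<forall>z\<in>X. c \<le> \<bar>fst z - snd z\<bar>" for X c
  proof -
    have "ennreal (c * measure \<pi> X) < ennreal \<epsilon>"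
      using cost_lower[OF cp that] Elt unfolding E_def by (rule le_less_trans)
    then show ?thesis using that(2) by (simp add: ennreal_less_iff)
  qed
  have close: "\<exists>j<k. \<bar>\<mu> i - \<mu>h j\<bar> < d" if i: "i < k" for i
  proof (rule ccontr)
    assume "\<not> ?thesis"
    then have far: "\<forall>z\<in>{\<mu> i} \<times> Sh. d \<le> \<bar>fst z - snd z\<bar>" unfolding Sh_def by force
    have X: "{\<mu> i} \<times> Sh \<in> sets \<pi>" using SB by (intro msr) auto
    have c1: "d * measure \<pi> ({\<mu> i} \<times> Sh) < \<epsilon>" using cost[OF X _ far] dpos by simp
    have "w i = measure \<pi> ({\<mu> i} \<times> UNIV)" using margw[OF i] by simp
    also have "\<dots> \<le> measure \<pi> ({\<mu> i} \<times> Sh \<union> UNIV \<times> (- Sh))"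
      using X SB by (intro finite_measure_mono) (auto intro!: msr)
    also have "\<dots> \<le> measure \<pi> ({\<mu> i} \<times> Sh) + measure \<pi> (UNIV \<times> (- Sh))"
      using X SB by (intro measure_Un_le) (auto intro!: msr)
    finally have "\<epsilon>\<^sub>2 \<le> measure \<pi> ({\<mu> i} \<times> Sh)" using nullSh wge[OF i] by simp
    then have "d * \<epsilon>\<^sub>2 \<le> d * measure \<pi> ({\<mu> i} \<times> Sh)" using dpos by simp
    then show False using c1 de2 by simp
  qed
  define \<sigma> where "\<sigma> = (\<lambda>i. if i < k then (SOME j. j < k \<and> \<bar>\<mu> i - \<mu>h j\<bar> < d) else i)"
  have \<sigma>: "\<sigma> i < k \<and> \<bar>\<mu> i - \<mu>h (\<sigma> i)\<bar> < d" if "i < k" for i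
    using someI_ex[OF close[OF that]] that unfolding \<sigma>_def by simp
  have inj\<sigma>: "inj_on \<sigma> {..<k}"
  proof (rule inj_onI)
    fix i i' assume ii: "i \<in> {..<k}" "i' \<in> {..<k}" "\<sigma> i = \<sigma> i'"
    show "i = i'"
    proof (rule ccontr)
      assume "i \<noteq> i'"
      then have "\<epsilon>\<^sub>1 \<le> \<bar>\<mu> i - \<mu> i'\<bar>" using sep ii by auto
      moreover have "\<bar>\<mu> i - \<mu>h (\<sigma> i)\<bar> < d" "\<bar>\<mu> i' - \<mu>h (\<sigma> i)\<bar> < d"
        using \<sigma>[of i] \<sigma>[of i'] ii by auto
      ultimately show False using dlt e1pos by linarith
    qed
  qed
  have im\<sigma>: "\<sigma> ` {..<k} = {..<k}"
    using \<sigma> inj\<sigma> by (intro endo_inj_surj) auto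
  have perm: "\<sigma> permutes {..<k}"
    using inj\<sigma> im\<sigma> by (intro bij_imp_permutes) (auto simp: bij_betw_def \<sigma>_def)
  have wbound: "\<bar>w i - wh (\<sigma> i)\<bar> < 2 * \<epsilon> / \<epsilon>\<^sub>1" if i: "i < k" for i
  proof -
    define j where "j = \<sigma> i"
    have j: "j < k" "\<bar>\<mu> i - \<mu>h j\<bar> < d" using \<sigma>[OF i] unfolding j_def by auto
    define x0 where "x0 = \<mu> i"
    define y0 where "y0 = \<mu>h j"
    define X0 where "X0 = {x0} \<times> {y0}"
    define X1 where "X1 = {x0} \<times> (Sh - {y0})"
    define X2 where "X2 = (S - {x0}) \<times> {y0}"
    have m: "X0 \<in> sets \<pi>" "X1 \<in> sets \<pi>" "X2 \<in> sets \<pi>"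
      unfolding X0_def X1_def X2_def S_def Sh_def
      by (rule msr; rule fin_borel(1); simp)+
    have far: "\<forall>z\<in>X1 \<union> X2. \<epsilon>\<^sub>1 / 2 \<le> \<bar>fst z - snd z\<bar>"
    proof
      fix z assume z: "z \<in> X1 \<union> X2"
      show "\<epsilon>\<^sub>1 / 2 \<le> \<bar>fst z - snd z\<bar>"
      proof (cases "z \<in> X1")
        case True
        then obtain j' where jj: "j' < k" "j' \<noteq> j" "z = (x0, \<mu>h j')"
          unfolding X1_def Sh_def y0_def by auto
        have a: "\<epsilon>\<^sub>1 \<le> \<bar>\<mu>h j' - \<mu>h j\<bar>" using sep(2)[of j' j] j jj by simp
        have "\<epsilon>\<^sub>1 / 2 \<le> \<bar>\<mu> i - \<mu>h j'\<bar>" using a j(2) dlt by arith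
        then show ?thesis using jj unfolding x0_def by simp
      next
        case False
        then have "z \<in> X2" using z by auto
        then obtain i' where ii: "i' < k" "i' \<noteq> i" "z = (\<mu> i', y0)"
          unfolding X2_def S_def x0_def by auto
        have a: "\<epsilon>\<^sub>1 \<le> \<bar>\<mu> i' - \<mu> i\<bar>" using sep(1)[of i' i] i ii by simp
        have "\<epsilon>\<^sub>1 / 2 \<le> \<bar>\<mu> i' - \<mu>h j\<bar>" using a j(2) dlt by arith
        then show ?thesis using ii unfolding y0_def by simp
      qed
    qed
    have "\<epsilon>\<^sub>1 / 2 * measure \<pi> (X1 \<union> X2) < \<epsilon>"
      using cost[OF _ _ far] m e1pos by auto
    moreover have "measure \<pi> (X1 \<union> X2) = measure \<pi> X1 + measure \<pi> X2"
      using m by (intro finite_measure_Union) (auto simp: X1_def X2_def)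
    ultimately have lt: "measure \<pi> X1 + measure \<pi> X2 < 2 * \<epsilon> / \<epsilon>\<^sub>1"
      using e1pos by (simp add: field_simps)
    have wi: "w i = measure \<pi> ({x0} \<times> UNIV)" using margw[OF i] x0_def by simp
    have whj: "wh j = measure \<pi> (UNIV \<times> {y0})" using margwh[OF j(1)] y0_def by simp
    have n: "UNIV \<times> (- Sh) \<in> sets \<pi>" "(- S) \<times> UNIV \<in> sets \<pi>"
      "{x0} \<times> UNIV \<in> sets \<pi>" "UNIV \<times> {y0} \<in> sets \<pi>"
      using SB by (auto intro!: msr)
    have sub1: "{x0} \<times> UNIV \<subseteq> X0 \<union> X1 \<union> UNIV \<times> (- Sh)"
      unfolding X0_def X1_def by auto
    have sub2: "UNIV \<times> {y0} \<subseteq> X0 \<union> X2 \<union> (- S) \<times> UNIV"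
      unfolding X0_def X2_def by auto
    have sub3: "X0 \<subseteq> {x0} \<times> UNIV" "X0 \<subseteq> UNIV \<times> {y0}"
      unfolding X0_def by auto
    have "measure \<pi> ({x0} \<times> UNIV) \<le> measure \<pi> (X0 \<union> X1 \<union> UNIV \<times> (- Sh))"
      using m n sub1 by (intro finite_measure_mono) auto
    also have "\<dots> \<le> measure \<pi> (X0 \<union> X1) + measure \<pi> (UNIV \<times> (- Sh))"
      using m n by (intro measure_Un_le) auto
    also have "\<dots> \<le> measure \<pi> X0 + measure \<pi> X1 + measure \<pi> (UNIV \<times> (- Sh))"
      using m measure_Un_le[of X0 \<pi> X1] by simp
    finally have w1: "w i \<le> measure \<pi> X0 + measure \<pi> X1" using wi nullSh by simp
    have "measure \<pi> (UNIV \<times> {y0}) \<le> measure \<pi> (X0 \<union> X2 \<union> (- S) \<times> UNIV)"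
      using m n sub2 by (intro finite_measure_mono) auto
    also have "\<dots> \<le> measure \<pi> (X0 \<union> X2) + measure \<pi> ((- S) \<times> UNIV)"
      using m n by (intro measure_Un_le) auto
    also have "\<dots> \<le> measure \<pi> X0 + measure \<pi> X2 + measure \<pi> ((- S) \<times> UNIV)"
      using m measure_Un_le[of X0 \<pi> X2] by simp
    finally have w2: "wh j \<le> measure \<pi> X0 + measure \<pi> X2" using whj nullS by simp
    have w3: "measure \<pi> X0 \<le> w i" unfolding wi
      using n sub3 by (intro finite_measure_mono) auto
    have w4: "measure \<pi> X0 \<le> wh j" unfolding whj
      using n sub3 by (intro finite_measure_mono) auto
    have "measure \<pi> X1 \<ge> 0" "measure \<pi> X2 \<ge> 0" by auto
    then have "\<bar>w i - wh j\<bar> \<le> measure \<pi> X1 + measure \<pi> X2" using w1 w2 w3 w4 by linarith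
    then show ?thesis using lt j_def by simp
  qed
  show ?thesis
    using perm \<sigma> wbound unfolding d_def by blast
qed

end
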